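(* Let $F$ be a minimally unsatisfiable clause-set, $v$ an $m$-singular variable for $F$ ($m\ge1$), and $F' := \mathrm{DP}_v(F)$. 1. (a) If $m\ge2$, then $\mathrm{var}_s(F')\subseteq\mathrm{var}_s(F)$ and $\mathrm{var}_{1s}(F')\subseteq\mathrm{var}_{1s}(F)$. (b) If $m=1$, then $\mathrm{var}_{1s}(F')\setminus\mathrm{var}_{1s}(F)\subseteq\mathrm{var}_{\neg1s}(F)$. 2. (a) If $m=1$, then $\mathrm{var}_s(F)\setminus\{v\}\subseteq\mathrm{var}_s(F')$ and $\mathrm{var}_{1s}(F)\setminus\{v\}\subseteq\mathrm{var}_{1s}(F')$. (b) If $m\ge2$, then $\mathrm{var}_s(F)\setminus\mathrm{var}_s(F')\subseteq\mathrm{var}_{\neg1s}(F)$.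
   Context: Literals are variables $v$ and complements $\overline{v}$; a clause is a finite set of literals with no complementary pair; a clause-set is a finite set of clauses; $\mathrm{ldeg}_F(x)$ is the number of clauses of $F$ containing literal $x$, $\mathrm{vdeg}_F(v)=\mathrm{ldeg}_F(v)+\mathrm{ldeg}_F(\overline{v})$. $\mathrm{DP}_v(F) := \{C \in F : v \notin \mathrm{var}(C)\} \cup \{(C \cup D)\setminus\{v,\overline{v}\} : C, D \in F,\ C \cap \overline{D} = \{v\}\}$. A variable $v$ is singular for $F$ if $\min(\mathrm{ldeg}_F(v),\mathrm{ldeg}_F(\overline{v}))=1$, and $m$-singular if additionally $\mathrm{vdeg}_F(v)-1=m$. $\mathrm{var}_s(F)$ is the set of singular variables of $F$; $\mathrm{var}_{1s}(F):=\{v:\mathrm{ldeg}_F(v)=\mathrm{ldeg}_F(\overline{v})=1\}$ is the set of 1-singular variables; $\mathrm{var}_{\neg1s}(F):=\mathrm{var}_s(F)\setminus\mathrm{var}_{1s}(F)$ is the set of non-1-singular variables. *)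

theory Defs
  imports Main
begin

datatype 'v lit = Pos 'v | Neg 'v

fun comp :: "'v lit \<Rightarrow> 'v lit" where
  "comp (Pos v) = Neg v"
| "comp (Neg v) = Pos v"

fun var_of :: "'v lit \<Rightarrow> 'v" where
  "var_of (Pos v) = v"
| "var_of (Neg v) = v"

type_synonym 'v clause = "'v lit set"
type_synonym 'v cls = "'v clause set"

definition comp_set :: "'v clause \<Rightarrow> 'v clause" where
  "comp_set C = comp ` C"

definition is_clause :: "'v clause \<Rightarrow> bool" where
  "is_clause C \<longleftrightarrow> finite C \<and> (\<forall>x\<in>C. comp x \<notin> C)"

definition is_clause_set :: "'v cls \<Rightarrow> bool" where
  "is_clause_set F \<longleftrightarrow> finite F \<and> (\<forall>C\<in>F. is_clause C)"

definition vars :: "'v clause \<Rightarrow> 'v set" where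
  "vars C = var_of ` C"

fun lit_val :: "('v \<Rightarrow> bool) \<Rightarrow> 'v lit \<Rightarrow> bool" where
  "lit_val \<phi> (Pos v) = \<phi> v"
| "lit_val \<phi> (Neg v) = (\<not> \<phi> v)"

definition satisfiable :: "'v cls \<Rightarrow> bool" where
  "satisfiable F \<longleftrightarrow> (\<exists>\<phi>. \<forall>C\<in>F. \<exists>x\<in>C. lit_val \<phi> x)"

definition minimally_unsat :: "'v cls \<Rightarrow> bool" where
  "minimally_unsat F \<longleftrightarrow> is_clause_set F \<and> \<not> satisfiable F \<and>
     (\<forall>C\<in>F. satisfiable (F - {C}))"

definition ldeg :: "'v cls \<Rightarrow> 'v lit \<Rightarrow> nat" where
  "ldeg F x = card {C \<in> F. x \<in> C}"

definition vdeg :: "'v cls \<Rightarrow> 'v \<Rightarrow> nat" where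
  "vdeg F v = ldeg F (Pos v) + ldeg F (Neg v)"

definition DP :: "'v \<Rightarrow> 'v cls \<Rightarrow> 'v cls" where
  "DP v F = {C \<in> F. v \<notin> vars C} \<union>
     {(C \<union> D) - {Pos v, Neg v} | C D. C \<in> F \<and> D \<in> F \<and> C \<inter> comp_set D = {Pos v}}"

definition singular :: "'v cls \<Rightarrow> 'v \<Rightarrow> bool" where
  "singular F v \<longleftrightarrow> min (ldeg F (Pos v)) (ldeg F (Neg v)) = 1"

definition m_singular :: "nat \<Rightarrow> 'v cls \<Rightarrow> 'v \<Rightarrow> bool" where
  "m_singular m F v \<longleftrightarrow> singular F v \<and> vdeg F v - 1 = m"

definition var_s :: "'v cls \<Rightarrow> 'v set" where
  "var_s F = {v. singular F v}"

definition var_1s :: "'v cls \<Rightarrow> 'v set" where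
  "var_1s F = {v. ldeg F (Pos v) = 1 \<and> ldeg F (Neg v) = 1}"

definition var_n1s :: "'v cls \<Rightarrow> 'v set" where
  "var_n1s F = var_s F - var_1s F"

end

theory Submission imports Defs begin

lemma comp_comp[simp]: "comp (comp l) = l" by (cases l) auto
lemma comp_neq[simp]: "comp l \<noteq> l" by (cases l) auto
lemma var_comp[simp]: "var_of (comp l) = var_of l" by (cases l) auto
lemma comp_inj_iff[simp]: "comp a = comp b \<longleftrightarrow> a = b" by (metis comp_comp)
lemma var_eq: "var_of l = var_of x \<Longrightarrow> l = x \<or> l = comp x" by (cases l; cases x) auto
lemma lit_val_comp[simp]: "lit_val \<phi> (comp l) = (\<not> lit_val \<phi> l)" by (cases l) auto
lemma in_comp_set: "l \<in> comp_set D \<longleftrightarrow> comp l \<in> D"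
  unfolding comp_set_def by (metis comp_comp image_iff)
lemma vars_iff: "v \<in> vars C \<longleftrightarrow> (\<exists>l\<in>C. var_of l = v)" unfolding vars_def by auto

lemma swap_lemma: "D \<inter> comp_set C = comp ` (C \<inter> comp_set D)"
proof
  show "D \<inter> comp_set C \<subseteq> comp ` (C \<inter> comp_set D)"
  proof
    fix l assume "l \<in> D \<inter> comp_set C"
    hence "comp l \<in> C \<inter> comp_set D" by (simp add: in_comp_set)
    thus "l \<in> comp ` (C \<inter> comp_set D)" by (metis comp_comp image_eqI)
  qed
qed (auto simp: in_comp_set)

lemma comp_img_single: "comp ` S = {comp a} \<longleftrightarrow> S = {a}"
proof
  assume "comp ` S = {comp a}"
  moreover have "S = comp ` comp ` S" by (simp add: image_image)
  ultimately show "S = {a}" by simp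
qed simp

definition DPx :: "'v lit \<Rightarrow> 'v cls \<Rightarrow> 'v cls" where
  "DPx x F = {C \<in> F. var_of x \<notin> vars C} \<union>
     {(C \<union> D) - {x, comp x} | C D. C \<in> F \<and> D \<in> F \<and> C \<inter> comp_set D = {x}}"

lemma DP_DPx: assumes "var_of x = v" shows "DP v F = DPx x F"
proof (cases x)
  case (Pos u) then have "u = v" using assms by simp
  then show ?thesis using Pos unfolding DP_def DPx_def by auto
next
  case (Neg u) hence uv: "u = v" using assms by simp
  have swap: "\<And>C D. D \<inter> comp_set C = {Neg v} \<longleftrightarrow> C \<inter> comp_set D = {Pos v}"
    by (metis comp.simps(1) comp_img_single swap_lemma)
  have "{(C \<union> D) - {Pos v, Neg v} | C D. C \<in> F \<and> D \<in> F \<and> C \<inter> comp_set D = {Pos v}}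
      = {(C \<union> D) - {Neg v, comp (Neg v)} | C D. C \<in> F \<and> D \<in> F \<and> C \<inter> comp_set D = {Neg v}}"
    by (auto simp: swap insert_commute)
  then show ?thesis using Neg uv unfolding DP_def DPx_def by simp
qed

lemma sat_subset: "satisfiable G \<Longrightarrow> H \<subseteq> G \<Longrightarrow> satisfiable H"
  unfolding satisfiable_def by blast

definition upd :: "('v \<Rightarrow> bool) \<Rightarrow> 'v lit \<Rightarrow> bool \<Rightarrow> ('v \<Rightarrow> bool)" where
  "upd \<phi> x b = \<phi>(var_of x := (case x of Pos _ \<Rightarrow> b | Neg _ \<Rightarrow> \<not> b))"
lemma upd_x[simp]: "lit_val (upd \<phi> x b) x = b" by (cases x) (auto simp: upd_def)
lemma upd_other: "var_of l \<noteq> var_of x \<Longrightarrow> lit_val (upd \<phi> x b) l = lit_val \<phi> l"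
  by (cases l; cases x) (auto simp: upd_def)

lemma clause_comp: "is_clause_set G \<Longrightarrow> C \<in> G \<Longrightarrow> l \<in> C \<Longrightarrow> comp l \<notin> C"
  unfolding is_clause_set_def is_clause_def by blast

lemma clash_x: "C \<inter> comp_set D = {x} \<Longrightarrow> x \<in> C \<and> comp x \<in> D"
  by (metis IntD1 IntD2 singletonI in_comp_set)

lemma DPx_sat: assumes "is_clause_set G" "satisfiable G" shows "satisfiable (DPx x G)"
proof -
  obtain \<phi> where phi: "\<forall>C\<in>G. \<exists>l\<in>C. lit_val \<phi> l" using assms(2) unfolding satisfiable_def by blast
  have "\<forall>E\<in>DPx x G. \<exists>l\<in>E. lit_val \<phi> l"
  proof
    fix E assume "E \<in> DPx x G"
    then consider "E \<in> G" | C D where "E = (C \<union> D) - {x, comp x}" "C\<in>G" "D\<in>G" "C \<inter> comp_set D = {x}"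
      unfolding DPx_def by blast
    then show "\<exists>l\<in>E. lit_val \<phi> l"
    proof cases
      case 1 then show ?thesis using phi by blast
    next
      case 2
      have xC: "x \<in> C" and cxD: "comp x \<in> D" using clash_x[OF 2(4)] by auto
      show ?thesis
      proof (cases "lit_val \<phi> x")
        case True
        obtain l where "l \<in> D" "lit_val \<phi> l" using phi 2(3) by blast
        moreover have "l \<noteq> comp x" using True calculation by auto
        moreover have "l \<noteq> x" using clause_comp[OF assms(1) 2(3) cxD] calculation(1) by auto
        ultimately show ?thesis using 2(1) by blast
      next
        case False
        obtain l where "l \<in> C" "lit_val \<phi> l" using phi 2(2) by blast
        moreover have "l \<noteq> x" using False calculation by auto
        moreover have "l \<noteq> comp x" using clause_comp[OF assms(1) 2(2) xC] calculation(1) by auto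
        ultimately show ?thesis using 2(1) by blast
      qed
    qed
  qed
  then show ?thesis unfolding satisfiable_def by blast
qed

lemma sat_DPx: assumes G: "is_clause_set G" and s: "satisfiable (DPx x G)" shows "satisfiable G"
proof -
  obtain \<phi> where phi: "\<forall>E\<in>DPx x G. \<exists>l\<in>E. lit_val \<phi> l" using s unfolding satisfiable_def by blast
  have base: "\<exists>l\<in>E. lit_val \<psi> l" if "E \<in> G" "x \<notin> E" "comp x \<notin> E"
     "\<And>l. var_of l \<noteq> var_of x \<Longrightarrow> lit_val \<psi> l = lit_val \<phi> l" for E \<psi>
  proof -
    have nv: "var_of x \<notin> vars E" using that(2,3) var_eq by (metis vars_iff)
    hence "E \<in> DPx x G" using that(1) unfolding DPx_def by blast
    then obtain l where "l\<in>E" "lit_val \<phi> l" using phi by blast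
    moreover have "var_of l \<noteq> var_of x" using nv calculation(1) by (auto simp: vars_iff)
    ultimately show ?thesis using that(4) by auto
  qed
  show ?thesis
  proof (cases "\<exists>C\<in>G. x \<in> C \<and> (\<forall>l\<in>C. l \<noteq> x \<longrightarrow> \<not> lit_val \<phi> l)")
    case False
    define \<psi> where "\<psi> = upd \<phi> x False"
    have "\<exists>l\<in>E. lit_val \<psi> l" if "E\<in>G" for E
    proof (cases "x \<in> E")
      case True
      with False that obtain l where "l\<in>E" "l\<noteq>x" "lit_val \<phi> l" by blast
      moreover have "l \<noteq> comp x" using clause_comp[OF G that True] calculation(1) by auto
      ultimately have "var_of l \<noteq> var_of x" using var_eq by blast
      then show ?thesis using \<open>l\<in>E\<close> \<open>lit_val \<phi> l\<close> upd_other unfolding \<psi>_def by metis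
    next
      case xE: False
      show ?thesis
      proof (cases "comp x \<in> E")
        case True then show ?thesis unfolding \<psi>_def by force
      next
        case False then show ?thesis using base[OF that xE False] upd_other unfolding \<psi>_def by blast
      qed
    qed
    then show ?thesis unfolding satisfiable_def by blast
  next
    case True
    then obtain C where C: "C\<in>G" "x\<in>C" "\<forall>l\<in>C. l \<noteq> x \<longrightarrow> \<not> lit_val \<phi> l" by blast
    define \<psi> where "\<psi> = upd \<phi> x True"
    have "\<exists>l\<in>E. lit_val \<psi> l" if "E\<in>G" for E
    proof (cases "x \<in> E")
      case True then show ?thesis unfolding \<psi>_def by force
    next
      case xE: False
      show ?thesis
      proof (cases "comp x \<in> E")
        case cxE: True
        show ?thesis
        proof (cases "C \<inter> comp_set E = {x}")
          case True
          hence "(C \<union> E) - {x, comp x} \<in> DPx x G" using C(1) that unfolding DPx_def by blast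
          then obtain l where l: "l \<in> (C \<union> E) - {x, comp x}" "lit_val \<phi> l" using phi by blast
          hence "var_of l \<noteq> var_of x" using var_eq by blast
          moreover have "l \<in> E" using l C(3) by auto
          ultimately show ?thesis using l(2) upd_other unfolding \<psi>_def by metis
        next
          case False
          have "x \<in> C \<inter> comp_set E" using C(2) cxE by (simp add: in_comp_set)
          have "\<exists>l\<in>C. comp l \<in> E \<and> l \<noteq> x"
          proof (rule ccontr)
            assume "\<not> ?thesis"
            hence "C \<inter> comp_set E = {x}" using \<open>x \<in> C \<inter> comp_set E\<close> by (auto simp: in_comp_set)
            with False show False by simp
          qed
          then obtain l where l: "l\<in>C" "comp l \<in> E" "l \<noteq> x" by blast
          have "l \<noteq> comp x" using clause_comp[OF G C(1) C(2)] l(1) by auto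
          hence "var_of l \<noteq> var_of x" using l(3) var_eq by blast
          moreover have "\<not> lit_val \<phi> l" using C(3) l by auto
          ultimately have "lit_val \<psi> (comp l)" using upd_other[of "comp l" x \<phi> True] unfolding \<psi>_def by simp
          then show ?thesis using l(2) by blast
        qed
      next
        case False then show ?thesis using base[OF that xE False] upd_other unfolding \<psi>_def by blast
      qed
    qed
    then show ?thesis unfolding satisfiable_def by blast
  qed
qed

lemma key:
  assumes mu: "minimally_unsat F" and uniq: "\<And>C. C \<in> F \<Longrightarrow> x \<in> C \<Longrightarrow> C = C0"
    and C0: "C0 \<in> F" "x \<in> C0" and D: "D \<in> F" "comp x \<in> D"
  shows "C0 \<inter> comp_set D = {x} \<and> (C0 \<union> D) - {x, comp x} \<notin> DPx x (F - {D})"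
proof (rule ccontr)
  assume neg: "\<not> ?thesis"
  have G: "is_clause_set F" "\<not> satisfiable F" "satisfiable (F - {D})"
    using mu D(1) unfolding minimally_unsat_def by auto
  have Gs: "is_clause_set (F - {D})" using G(1) unfolding is_clause_set_def by auto
  have "DPx x F \<subseteq> DPx x (F - {D})"
  proof
    fix E assume "E \<in> DPx x F"
    then consider "E \<in> F" "var_of x \<notin> vars E" | C D' where "E = (C \<union> D') - {x, comp x}"
       "C\<in>F" "D'\<in>F" "C \<inter> comp_set D' = {x}" unfolding DPx_def by blast
    then show "E \<in> DPx x (F - {D})"
    proof cases
      case 1
      have "E \<noteq> D" using 1(2) D(2) by (auto simp: vars_iff)
      then show ?thesis using 1 unfolding DPx_def by blast
    next
      case 2
      have "x \<in> C" using clash_x[OF 2(4)] by auto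
      hence CC: "C = C0" using uniq 2(2) by blast
      show ?thesis
      proof (cases "D' = D")
        case True
        with neg 2 CC show ?thesis by auto
      next
        case False
        have "C0 \<noteq> D" using clause_comp[OF G(1) C0] D(2) by auto
        then show ?thesis using 2 False CC C0(1) unfolding DPx_def by blast
      qed
    qed
  qed
  moreover have "satisfiable (DPx x (F - {D}))" using DPx_sat[OF Gs G(3)] .
  ultimately have "satisfiable (DPx x F)" using sat_subset by blast
  then show False using sat_DPx[OF G(1)] G(2) by blast
qed

lemma degrees:
  assumes mu: "minimally_unsat F" and xv: "var_of x = v" and lx: "ldeg F x = 1"
    and lm: "ldeg F (comp x) = m"
  shows "ldeg (DP v F) (Pos v) = 0 \<and> ldeg (DP v F) (Neg v) = 0 \<and>
    (\<exists>C0. (\<forall>y. y \<in> C0 \<longrightarrow> comp y \<notin> C0) \<and>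
      (\<forall>y. var_of y \<noteq> v \<longrightarrow>
          (y \<notin> C0 \<longrightarrow> ldeg (DP v F) y = ldeg F y) \<and>
          (y \<in> C0 \<longrightarrow> (\<exists>a b. b \<le> m \<and> ldeg F y = a + 1 + b \<and> ldeg (DP v F) y = a + m))))"
proof -
  have Fc: "is_clause_set F" using mu unfolding minimally_unsat_def by auto
  hence finF: "finite F" unfolding is_clause_set_def by auto
  obtain C0 where C0set: "{C\<in>F. x\<in>C} = {C0}" using lx card_1_singletonE unfolding ldeg_def by blast
  hence C0: "C0 \<in> F" "x \<in> C0" and uniq: "\<And>C. C \<in> F \<Longrightarrow> x \<in> C \<Longrightarrow> C = C0" by auto
  define N where "N = {D\<in>F. comp x \<in> D}"
  define F0 where "F0 = {C\<in>F. v \<notin> vars C}"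
  define R where "R = (\<lambda>D. (C0 \<union> D) - {x, comp x})"
  have keyN: "C0 \<inter> comp_set D = {x} \<and> R D \<notin> DPx x (F - {D})" if "D \<in> N" for D
    using key[OF mu uniq C0] that unfolding N_def R_def by auto
  have C0N: "C0 \<notin> N" using clause_comp[OF Fc C0] unfolding N_def by auto
  have DPeq: "DP v F = F0 \<union> R ` N"
  proof -
    have "DPx x F = F0 \<union> R ` N"
    proof
      show "DPx x F \<subseteq> F0 \<union> R ` N"
      proof
        fix E assume "E \<in> DPx x F"
        then consider "E \<in> F0" | C D where "E = (C \<union> D) - {x, comp x}"
          "C\<in>F" "D\<in>F" "C \<inter> comp_set D = {x}" unfolding DPx_def F0_def xv by blast
        then show "E \<in> F0 \<union> R ` N"
        proof cases
          case 2
          have "C = C0" "D \<in> N" using clash_x[OF 2(4)] uniq 2 unfolding N_def by auto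
          then show ?thesis using 2(1) unfolding R_def by auto
        qed simp
      qed
    next
      show "F0 \<union> R ` N \<subseteq> DPx x F"
      proof
        fix E assume "E \<in> F0 \<union> R ` N"
        then show "E \<in> DPx x F"
        proof
          assume "E \<in> F0" then show ?thesis unfolding F0_def DPx_def xv by blast
        next
          assume "E \<in> R ` N"
          then obtain D where D: "D \<in> N" "E = R D" by blast
          then show ?thesis using keyN[OF D(1)] C0(1) unfolding DPx_def R_def N_def by blast
        qed
      qed
    qed
    then show ?thesis using DP_DPx[OF xv] by simp
  qed
  have F0sub: "F0 \<subseteq> DPx x (F - {D})" if "D \<in> N" for D
  proof -
    have "D \<notin> F0" using that xv unfolding N_def F0_def by (auto simp: vars_iff) (metis var_comp)
    then show ?thesis unfolding F0_def DPx_def xv by blast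
  qed
  have disj: "F0 \<inter> R ` N = {}"
    using keyN F0sub by blast
  have inj: "inj_on R N"
  proof (rule inj_onI, rule ccontr)
    fix D D' assume D: "D \<in> N" "D' \<in> N" "R D = R D'" "D \<noteq> D'"
    have "C0 \<noteq> D" using C0N D(1) by auto
    hence "R D' \<in> DPx x (F - {D})" using keyN[OF D(2)] D C0(1) unfolding DPx_def R_def N_def by blast
    then show False using keyN[OF D(1)] D(3) by simp
  qed
  have cardN: "card N = m" using lm unfolding ldeg_def N_def by simp
  have finN: "finite N" "finite F0" using finF unfolding N_def F0_def by auto
  have vnot: "\<forall>E\<in>DP v F. Pos v \<notin> E \<and> Neg v \<notin> E"
  proof
    fix E assume "E \<in> DP v F"
    hence "E \<in> F0 \<or> E \<in> R ` N" using DPeq by auto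
    moreover have "{Pos v, Neg v} = {x, comp x}" using xv by (cases x) auto
    ultimately show "Pos v \<notin> E \<and> Neg v \<notin> E" unfolding F0_def R_def
      by (auto simp: vars_iff)
  qed
  have v0: "ldeg (DP v F) (Pos v) = 0" "ldeg (DP v F) (Neg v) = 0"
  proof -
    have "{C \<in> DP v F. Pos v \<in> C} = {}" "{C \<in> DP v F. Neg v \<in> C} = {}" using vnot by auto
    then show "ldeg (DP v F) (Pos v) = 0" "ldeg (DP v F) (Neg v) = 0" unfolding ldeg_def by (metis card.empty)+
  qed
  have degF': "ldeg (DP v F) y = card {E\<in>F0. y\<in>E} + card (if y \<in> C0 then N else {D\<in>N. y\<in>D})"
    if yv: "var_of y \<noteq> v" for y
  proof -
    have yx: "y \<noteq> x" "y \<noteq> comp x" using yv xv by auto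
    have RN: "{D\<in>N. y \<in> R D} = (if y \<in> C0 then N else {D\<in>N. y\<in>D})"
      using yx unfolding R_def by auto
    have "{E \<in> DP v F. y \<in> E} = {E\<in>F0. y\<in>E} \<union> R ` {D\<in>N. y \<in> R D}"
      unfolding DPeq by auto
    moreover have "card ({E\<in>F0. y\<in>E} \<union> R ` {D\<in>N. y \<in> R D})
        = card {E\<in>F0. y\<in>E} + card (R ` {D\<in>N. y \<in> R D})"
      by (rule card_Un_disjoint) (use finN disj in auto)
    moreover have "card (R ` {D\<in>N. y \<in> R D}) = card {D\<in>N. y \<in> R D}"
      by (rule card_image) (rule inj_on_subset[OF inj], auto)
    ultimately show ?thesis unfolding ldeg_def RN by simp
  qed
  have degF: "ldeg F y = card {E\<in>F0. y\<in>E} + (if y \<in> C0 then 1 else 0) + card {D\<in>N. y\<in>D}"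
    if yv: "var_of y \<noteq> v" for y
  proof -
    have split: "{E\<in>F. y\<in>E} = ({E\<in>F0. y\<in>E} \<union> (if y \<in> C0 then {C0} else {})) \<union> {D\<in>N. y\<in>D}"
    proof (rule set_eqI, rule iffI)
      fix E assume E: "E \<in> {E\<in>F. y\<in>E}"
      show "E \<in> ({E\<in>F0. y\<in>E} \<union> (if y \<in> C0 then {C0} else {})) \<union> {D\<in>N. y\<in>D}"
      proof (cases "v \<in> vars E")
        case True
        then obtain l where "l \<in> E" "var_of l = var_of x" using xv by (auto simp: vars_iff)
        hence "x \<in> E \<or> comp x \<in> E" using var_eq by blast
        then show ?thesis using E uniq unfolding N_def by auto
      next
        case False then show ?thesis using E unfolding F0_def by auto
      qed
    next
      fix E assume "E \<in> ({E\<in>F0. y\<in>E} \<union> (if y \<in> C0 then {C0} else {})) \<union> {D\<in>N. y\<in>D}"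
      then show "E \<in> {E\<in>F. y\<in>E}" using C0 unfolding F0_def N_def by (auto split: if_splits)
    qed
    have d1: "{E\<in>F0. y\<in>E} \<inter> (if y \<in> C0 then {C0} else {}) = {}"
      using C0 xv unfolding F0_def by (auto simp: vars_iff)
    have d2: "({E\<in>F0. y\<in>E} \<union> (if y \<in> C0 then {C0} else {})) \<inter> {D\<in>N. y\<in>D} = {}"
      using C0N xv unfolding F0_def N_def by (auto simp: vars_iff)
    have "card {E\<in>F. y\<in>E} = card ({E\<in>F0. y\<in>E} \<union> (if y \<in> C0 then {C0} else {})) + card {D\<in>N. y\<in>D}"
      unfolding split by (rule card_Un_disjoint) (use finN d2 in auto)
    also have "card ({E\<in>F0. y\<in>E} \<union> (if y \<in> C0 then {C0} else {})) = card {E\<in>F0. y\<in>E} + (if y \<in> C0 then 1 else 0)"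
      using d1 finN by (simp add: card_Un_disjoint)
    finally show ?thesis unfolding ldeg_def .
  qed
  have cl0: "\<forall>y. y \<in> C0 \<longrightarrow> comp y \<notin> C0" using clause_comp[OF Fc C0(1)] by blast
  have "\<forall>y. var_of y \<noteq> v \<longrightarrow>
          (y \<notin> C0 \<longrightarrow> ldeg (DP v F) y = ldeg F y) \<and>
          (y \<in> C0 \<longrightarrow> (\<exists>a b. b \<le> m \<and> ldeg F y = a + 1 + b \<and> ldeg (DP v F) y = a + m))"
  proof (intro allI impI conjI)
    fix y assume yv: "var_of y \<noteq> v"
    { assume "y \<notin> C0" then show "ldeg (DP v F) y = ldeg F y" using degF[OF yv] degF'[OF yv] by simp }
    { assume yC: "y \<in> C0"
      have "card {D\<in>N. y\<in>D} \<le> m" using cardN finN card_mono[of N "{D\<in>N. y\<in>D}"] by auto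
      then show "\<exists>a b. b \<le> m \<and> ldeg F y = a + 1 + b \<and> ldeg (DP v F) y = a + m"
        using degF[OF yv] degF'[OF yv] yC cardN by auto }
  qed
  then show ?thesis using v0 cl0 by blast
qed

theorem corollary25:
  fixes F :: "'v cls" and v :: 'v and m :: nat
  assumes "minimally_unsat F"
    and "m_singular m F v" and "m \<ge> 1"
  shows "(m \<ge> 2 \<longrightarrow> var_s (DP v F) \<subseteq> var_s F \<and> var_1s (DP v F) \<subseteq> var_1s F)
       \<and> (m = 1 \<longrightarrow> var_1s (DP v F) - var_1s F \<subseteq> var_n1s F)
       \<and> (m = 1 \<longrightarrow> var_s F - {v} \<subseteq> var_s (DP v F) \<and> var_1s F - {v} \<subseteq> var_1s (DP v F))
       \<and> (m \<ge> 2 \<longrightarrow> var_s F - var_s (DP v F) \<subseteq> var_n1s F)"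
proof -
  have sv: "min (ldeg F (Pos v)) (ldeg F (Neg v)) = 1"
    and vm: "ldeg F (Pos v) + ldeg F (Neg v) - 1 = m"
    using assms(2) unfolding m_singular_def singular_def vdeg_def by auto
  obtain x where x: "var_of x = v" "ldeg F x = 1" "ldeg F (comp x) = m"
  proof (cases "ldeg F (Pos v) = 1")
    case True then show ?thesis using that[of "Pos v"] vm by auto
  next
    case False hence "ldeg F (Neg v) = 1" using sv by (auto simp: min_def split: if_splits)
    then show ?thesis using that[of "Neg v"] vm by auto
  qed
  have vF: "(ldeg F (Pos v) = 1 \<and> ldeg F (Neg v) = m) \<or> (ldeg F (Neg v) = 1 \<and> ldeg F (Pos v) = m)"
    using x by (cases x) auto
  from degrees[OF assms(1) x] obtain C0 where
    v0: "ldeg (DP v F) (Pos v) = 0" "ldeg (DP v F) (Neg v) = 0" and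
    cl: "\<forall>y. y \<in> C0 \<longrightarrow> comp y \<notin> C0" and
    W: "\<forall>y. var_of y \<noteq> v \<longrightarrow>
          (y \<notin> C0 \<longrightarrow> ldeg (DP v F) y = ldeg F y) \<and>
          (y \<in> C0 \<longrightarrow> (\<exists>a b. b \<le> m \<and> ldeg F y = a + 1 + b \<and> ldeg (DP v F) y = a + m))"
    by blast
  have wf: "(ldeg (DP v F) (Pos w) = ldeg F (Pos w) \<and> ldeg (DP v F) (Neg w) = ldeg F (Neg w)) \<or>
     (ldeg (DP v F) (Neg w) = ldeg F (Neg w) \<and> (\<exists>a b. b \<le> m \<and> ldeg F (Pos w) = a + 1 + b \<and> ldeg (DP v F) (Pos w) = a + m)) \<or>
     (ldeg (DP v F) (Pos w) = ldeg F (Pos w) \<and> (\<exists>a b. b \<le> m \<and> ldeg F (Neg w) = a + 1 + b \<and> ldeg (DP v F) (Neg w) = a + m))"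
    if "w \<noteq> v" for w
  proof (cases "Pos w \<in> C0")
    case True
    hence "Neg w \<notin> C0" using cl by (metis comp.simps(1))
    then show ?thesis using W True that by auto
  next
    case False
    then show ?thesis using W that by (cases "Neg w \<in> C0") auto
  qed
  show ?thesis
  proof (intro conjI impI subsetI)
    fix w assume "2 \<le> m" "w \<in> var_s (DP v F)" then show "w \<in> var_s F"
      using wf[of w] v0 by (cases "w = v") (auto simp: var_s_def singular_def min_def split: if_splits)
  next
    fix w assume "2 \<le> m" "w \<in> var_1s (DP v F)" then show "w \<in> var_1s F"
      using wf[of w] v0 by (cases "w = v") (auto simp: var_1s_def)
  next
    fix w assume "m = 1" "w \<in> var_1s (DP v F) - var_1s F" then show "w \<in> var_n1s F"
      using wf[of w] v0 by (cases "w = v") (auto simp: var_n1s_def var_s_def var_1s_def singular_def min_def)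
  next
    fix w assume "m = 1" "w \<in> var_s F - {v}" then show "w \<in> var_s (DP v F)"
      using wf[of w] by (auto simp: var_s_def singular_def min_def split: if_splits)
  next
    fix w assume "m = 1" "w \<in> var_1s F - {v}" then show "w \<in> var_1s (DP v F)"
      using wf[of w] by (auto simp: var_1s_def)
  next
    fix w assume "2 \<le> m" "w \<in> var_s F - var_s (DP v F)" then show "w \<in> var_n1s F"
      using wf[of w] vF by (cases "w = v") (auto simp: var_n1s_def var_s_def var_1s_def singular_def min_def split: if_splits)
  qed
qed

end
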